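(* Let $(Y,\sigma_Y)$ be an infinite mixing shift of finite type. Then there is a closed $\sigma_Y$-invariant subset $Z\subseteq Y$ such that $(Z,\sigma_Y|_Z)$ is a CAM $\mathbb{Z}$-system.
   Context: A $\mathbb{Z}$-system $(X,T)$ is a compact metric space $X$ with a homeomorphism $T$. It is topologically transitive if for all nonempty open $U,V$ there is $n$ with $T^nU\cap V\neq\emptyset$; the action is faithful if $T^n=\mathrm{id}$ only for $n=0$. A point is periodic if its orbit is finite. The system is chaotic almost minimal (CAM) if: (1) it is topologically transitive and the action is faithful; (2) the periodic points are dense in $X$; (3) every proper closed $T$-invariant subset of $X$ is finite. A shift of finite type is a subshift of $\mathcal{A}^{\mathbb{Z}}$ ($\mathcal{A}$ finite) defined by forbidding a finite set of words; it is mixing if for all nonempty open $U,V$ there is $N$ with $\sigma^nU\cap V\neq\emptyset$ for all $n\ge N$. *)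

theory Defs
  imports "HOL-Analysis.Analysis"
begin

definition shift_top :: "(int \<Rightarrow> 'a::finite) topology" where
  "shift_top = product_topology (\<lambda>_. discrete_topology UNIV) UNIV"

definition shift :: "(int \<Rightarrow> 'a) \<Rightarrow> (int \<Rightarrow> 'a)" where
  "shift x = (\<lambda>i. x (i + 1))"

definition occurs_at :: "'a list \<Rightarrow> (int \<Rightarrow> 'a) \<Rightarrow> int \<Rightarrow> bool" where
  "occurs_at w x n \<longleftrightarrow> (\<forall>i<length w. x (n + int i) = w ! i)"

definition is_SFT :: "(int \<Rightarrow> 'a::finite) set \<Rightarrow> bool" where
  "is_SFT Y \<longleftrightarrow> (\<exists>F :: 'a list set. finite F \<and>
      Y = {x. \<forall>w\<in>F. \<forall>n. \<not> occurs_at w x n})"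

definition mixing_shift :: "(int \<Rightarrow> 'a::finite) set \<Rightarrow> bool" where
  "mixing_shift Y \<longleftrightarrow> (\<forall>U V. openin (subtopology shift_top Y) U \<and> U \<noteq> {} \<and>
      openin (subtopology shift_top Y) V \<and> V \<noteq> {} \<longrightarrow>
      (\<exists>N. \<forall>n\<ge>N. (shift ^^ n) ` U \<inter> V \<noteq> {}))"

definition zit :: "'b set \<Rightarrow> ('b \<Rightarrow> 'b) \<Rightarrow> int \<Rightarrow> 'b \<Rightarrow> 'b" where
  "zit X T n = (if 0 \<le> n then T ^^ nat n else inv_into X T ^^ nat (- n))"

definition CAM_system :: "'b topology \<Rightarrow> ('b \<Rightarrow> 'b) \<Rightarrow> bool" where
  "CAM_system X T \<longleftrightarrow>
     compact_space X \<and> metrizable_space X \<and> homeomorphic_map X X T \<and>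
     \<comment> \<open>(1) topologically transitive and faithful\<close>
     (\<forall>U V. openin X U \<and> U \<noteq> {} \<and> openin X V \<and> V \<noteq> {} \<longrightarrow>
        (\<exists>n::int. zit (topspace X) T n ` U \<inter> V \<noteq> {})) \<and>
     (\<forall>n::int. (\<forall>x\<in>topspace X. zit (topspace X) T n x = x) \<longrightarrow> n = 0) \<and>
     \<comment> \<open>(2) periodic points (finite orbit) are dense\<close>
     X closure_of {x \<in> topspace X. finite (range (\<lambda>n. zit (topspace X) T n x))} = topspace X \<and>
     \<comment> \<open>(3) every proper closed invariant subset is finite\<close>
     (\<forall>C. closedin X C \<and> T ` C = C \<and> C \<noteq> topspace X \<longrightarrow> finite C)"

end

theory Submission
  imports Defs
begin


definition sh :: "int \<Rightarrow> (int \<Rightarrow> 'a) \<Rightarrow> (int \<Rightarrow> 'a)" where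
  "sh d x = (\<lambda>i. x (i + d))"

definition cyl :: "(int \<Rightarrow> 'a) \<Rightarrow> int \<Rightarrow> (int \<Rightarrow> 'a) set" where
  "cyl x N = {y. \<forall>i. \<bar>i\<bar> \<le> N \<longrightarrow> y i = x i}"

lemma topspace_shift_top [simp]: "topspace (shift_top :: (int \<Rightarrow> 'a::finite) topology) = UNIV"
  by (simp add: shift_top_def)

lemma openin_cyl: "openin (shift_top :: (int \<Rightarrow> 'a::finite) topology) (cyl x N)"
proof -
  have e: "cyl x N = PiE UNIV (\<lambda>i. if \<bar>i\<bar> \<le> N then {x i} else UNIV)"
    by (auto simp: cyl_def PiE_def Pi_def split: if_splits)
  have "{i. (if \<bar>i\<bar> \<le> N then {x i} else UNIV) \<noteq> UNIV} \<subseteq> {-N..N}" by auto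
  then have "finite {i. (if \<bar>i\<bar> \<le> N then {x i} else UNIV) \<noteq> UNIV}"
    using finite_subset by blast
  then show ?thesis unfolding e shift_top_def
    by (subst openin_PiE_gen) auto
qed

lemma openin_cyl_sub:
  assumes "openin (shift_top :: (int \<Rightarrow> 'a::finite) topology) W" "x \<in> W"
  shows "\<exists>N. cyl x N \<subseteq> W"
proof -
  obtain U where U: "finite {i. U i \<noteq> UNIV}" "x \<in> PiE UNIV U" "PiE UNIV U \<subseteq> W"
    using assms unfolding shift_top_def openin_product_topology_alt by fastforce
  define N where "N = Max (insert 0 (abs ` {i. U i \<noteq> UNIV}))"
  have "\<And>i. U i \<noteq> UNIV \<Longrightarrow> \<bar>i\<bar> \<le> N" unfolding N_def using U(1) by (intro Max_ge) auto
  then have "cyl x N \<subseteq> PiE UNIV U" using U(2) by (fastforce simp: cyl_def PiE_def Pi_def)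
  then show ?thesis using U(3) by blast
qed

lemma cont_sh: "continuous_map (shift_top :: (int \<Rightarrow> 'a::finite) topology) shift_top (sh d)"
  unfolding shift_top_def sh_def continuous_map_componentwise_UNIV
  by (auto intro: continuous_map_product_projection)

lemma compact_shift_top: "compact_space (shift_top :: (int \<Rightarrow> 'a::finite) topology)"
  unfolding shift_top_def by (simp add: compact_space_product_topology compact_space_discrete_topology)

lemma metrizable_shift_top: "metrizable_space (shift_top :: (int \<Rightarrow> 'a::finite) topology)"
  unfolding shift_top_def by (simp add: metrizable_space_product_topology)

lemma hausdorff_shift_top: "Hausdorff_space (shift_top :: (int \<Rightarrow> 'a::finite) topology)"
  using metrizable_shift_top metrizable_imp_Hausdorff_space by blast



lemma sh_apply: "sh d x i = x (i + d)" by (simp add: sh_def)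
lemma sh_sh [simp]: "sh a (sh b x) = sh (a + b) x" by (simp add: sh_def fun_eq_iff add_ac)
lemma sh_0 [simp]: "sh 0 x = x" by (simp add: sh_def)
lemma shift_sh: "shift = sh 1" by (simp add: shift_def sh_def fun_eq_iff)
lemma funpow_shift: "(shift ^^ n) = sh (int n)"
  by (induction n) (auto simp: shift_sh fun_eq_iff sh_apply algebra_simps)

lemma inj_sh: "inj (sh d)"
  by (rule injI) (metis add_diff_cancel sh_0 sh_sh diff_add_cancel)

lemma inv_sh: "sh (-d) (sh d x) = x" by simp

lemma shift_inv_all:
  assumes "shift ` S = S" shows "sh d ` S \<subseteq> S"
proof -
  have p: "sh 1 ` S \<subseteq> S" using assms by (simp add: shift_sh)
  have m: "sh (-1) ` S \<subseteq> S"
  proof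
    fix y assume "y \<in> sh (-1) ` S"
    then obtain x where x: "x \<in> S" "y = sh (-1) x" by auto
    then obtain z where "z \<in> S" "x = sh 1 z" using assms by (auto simp: shift_sh)
    then show "y \<in> S" using x by simp
  qed
  have pos: "sh (int n) ` S \<subseteq> S" for n
  proof (induction n)
    case (Suc n)
    { fix x assume "x \<in> S" then have "sh (int n) x \<in> S" using Suc by auto
      then have "sh 1 (sh (int n) x) \<in> S" using p by auto
      then have "sh (int (Suc n)) x \<in> S" by (simp add: add.commute) }
    then show ?case by auto
  qed simp
  have neg: "sh (- int n) ` S \<subseteq> S" for n
  proof (induction n)
    case (Suc n)
    { fix x assume "x \<in> S" then have "sh (- int n) x \<in> S" using Suc by auto
      then have "sh (-1) (sh (- int n) x) \<in> S" using m by auto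
      then have "sh (- int (Suc n)) x \<in> S" by (simp add: add.commute) }
    then show ?case by auto
  qed simp
  show ?thesis
  proof (cases "d \<ge> 0")
    case True then show ?thesis using pos[of "nat d"] by simp
  next
    case False then show ?thesis using neg[of "nat (-d)"] by simp
  qed
qed

lemma inv_all_shift:
  assumes "\<And>d. sh d ` S \<subseteq> S" shows "shift ` S = S"
proof
  show "shift ` S \<subseteq> S" using assms[of 1] by (simp add: shift_sh)
  show "S \<subseteq> shift ` S"
  proof
    fix x assume "x \<in> S"
    then have "sh (-1) x \<in> S" using assms[of "-1"] by auto
    moreover have "x = shift (sh (-1) x)" by (simp add: shift_sh)
    ultimately show "x \<in> shift ` S" by blast
  qed
qed

lemma zit_eq:
  assumes "shift ` S = S" "x \<in> S"
  shows "zit S shift n x = sh n x"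
proof -
  have inv1: "inv_into S shift y = sh (-1) y" if "y \<in> S" for y
  proof (rule inv_into_f_eq)
    show "inj_on shift S" using inj_sh[of 1] inj_on_subset by (metis shift_sh subset_UNIV)
    show "sh (-1) y \<in> S" using shift_inv_all[OF assms(1), of "-1"] that by auto
    show "shift (sh (-1) y) = y" by (simp add: shift_sh)
  qed
  have neg: "(inv_into S shift ^^ m) x = sh (- int m) x" for m
  proof (induction m)
    case (Suc m)
    have "sh (- int m) x \<in> S" using shift_inv_all[OF assms(1)] assms(2) by auto
    then show ?case using Suc by (simp add: inv1 add_ac)
  qed simp
  show ?thesis
    by (cases "0 \<le> n") (auto simp: zit_def funpow_shift neg)
qed

lemma sh_period_mult:
  assumes "sh P x = x" shows "sh (P * q) x = x"
proof -
  have pos: "sh (P * int n) x = x" for n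
  proof (induction n)
    case (Suc n)
    have "sh (P * int (Suc n)) x = sh P (sh (P * int n) x)" by (simp add: algebra_simps)
    then show ?case using Suc assms by metis
  qed simp
  have m: "sh (-P) x = x" by (metis assms inv_sh)
  have neg: "sh (- P * int n) x = x" for n
  proof (induction n)
    case (Suc n)
    have "sh (- P * int (Suc n)) x = sh (-P) (sh (- P * int n) x)" by (simp add: algebra_simps)
    then show ?case using Suc m by metis
  qed simp
  show ?thesis
  proof (cases "q \<ge> 0")
    case True then show ?thesis using pos[of "nat q"] by simp
  next
    case False then show ?thesis using neg[of "nat (-q)"] by simp
  qed
qed

lemma finite_periodic:
  assumes "P > 0" shows "finite {x :: int \<Rightarrow> 'a::finite. sh P x = x}"
proof -
  let ?f = "\<lambda>l::'a list. \<lambda>i. l ! nat (i mod P)"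
  have "{x :: int \<Rightarrow> 'a. sh P x = x} \<subseteq> ?f ` {l. set l \<subseteq> UNIV \<and> length l = nat P}"
  proof
    fix x :: "int \<Rightarrow> 'a" assume "x \<in> {x. sh P x = x}"
    then have per: "sh P x = x" by simp
    let ?l = "map (\<lambda>t. x (int t)) [0..<nat P]"
    have "x = ?f ?l"
    proof
      fix i
      have "sh (P * (- (i div P))) x = x" using sh_period_mult[OF per] by metis
      then have "x i = sh (P * (- (i div P))) x i" by simp
      also have "\<dots> = x (i mod P)" by (simp add: sh_apply minus_mult_div_eq_mod)
      also have "\<dots> = ?f ?l i" using assms by (simp add: nth_map)
      finally show "x i = ?f ?l i" .
    qed
    then show "x \<in> ?f ` {l. set l \<subseteq> UNIV \<and> length l = nat P}" by force
  qed
  moreover have "finite {l::'a list. set l \<subseteq> UNIV \<and> length l = nat P}"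
    by (rule finite_lists_length_eq) simp
  ultimately show ?thesis using finite_subset by blast
qed

lemma closed_compl_open:
  assumes "closedin X S" "x \<in> topspace X" "\<And>W. openin X W \<Longrightarrow> x \<in> W \<Longrightarrow> W \<inter> S \<noteq> {}"
  shows "x \<in> S"
  using assms(3)[of "topspace X - S"] assms(1,2) by (auto simp: closedin_def)



lemma closed_E:
  assumes "closedin shift_top Z" "openin shift_top W"
  shows "closedin (shift_top :: (int \<Rightarrow> 'a::finite) topology) {z\<in>Z. \<forall>n. sh n z \<notin> W}"
proof -
  have e: "{z\<in>Z. \<forall>n. sh n z \<notin> W} = Z \<inter> \<Inter> (range (\<lambda>n. {z \<in> topspace shift_top. sh n z \<in> UNIV - W}))"
    by auto
  have "closedin (shift_top :: (int \<Rightarrow> 'a::finite) topology) {z \<in> topspace shift_top. sh n z \<in> UNIV - W}" for n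
    by (rule closedin_continuous_map_preimage[OF cont_sh]) (use assms(2) in \<open>auto simp: closedin_def Diff_Diff_Int\<close>)
  then have "closedin (shift_top :: (int \<Rightarrow> 'a::finite) topology) (\<Inter> (range (\<lambda>n. {z \<in> topspace shift_top. sh n z \<in> UNIV - W})))"
    by (intro closedin_Inter) auto
  then show ?thesis unfolding e using assms(1) by (intro closedin_Int)
qed

lemma cont_sh_sub: "continuous_map (subtopology shift_top Z) (subtopology (shift_top :: (int \<Rightarrow> 'a::finite) topology) Z) (sh d)"
  if "\<And>d. sh d ` Z \<subseteq> Z"
  using that by (auto simp: continuous_map_in_subtopology intro!: continuous_map_from_subtopology cont_sh)

lemma CAM_general:
  fixes Z :: "(int \<Rightarrow> 'a::finite) set"
  assumes closed: "closedin shift_top Z"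
  and inv: "\<And>d. sh d ` Z \<subseteq> Z"
  and inf: "infinite Z"
  and perd: "\<And>x W. x \<in> Z \<Longrightarrow> openin shift_top W \<Longrightarrow> x \<in> W \<Longrightarrow> \<exists>y\<in>Z\<inter>W. \<exists>P>0. sh P y = y"
  and mini: "\<And>D. D \<subseteq> Z \<Longrightarrow> closedin shift_top D \<Longrightarrow> (\<And>d. sh d ` D \<subseteq> D) \<Longrightarrow> infinite D \<Longrightarrow> D = Z"
  shows "CAM_system (subtopology shift_top Z) shift"
proof -
  let ?X = "subtopology shift_top Z"
  have invp: "\<And>d x. x\<in>Z \<Longrightarrow> sh d x \<in> Z" using inv by blast
  have ts: "topspace ?X = Z" by simp
  have shZ: "shift ` Z = Z" using inv inv_all_shift by blast
  have zit: "\<And>n x. x \<in> Z \<Longrightarrow> zit Z shift n x = sh n x" using zit_eq[OF shZ] by blast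
  have c1: "compact_space ?X"
    by (rule compact_space_subtopology, rule closedin_compact_space[OF compact_shift_top closed])
  have c2: "metrizable_space ?X" by (simp add: metrizable_space_subtopology metrizable_shift_top)
  have c3: "homeomorphic_map ?X ?X shift"
    unfolding homeomorphic_map_maps homeomorphic_maps_def
    by (rule exI[of _ "sh (-1)"]) (auto simp: shift_sh inv invp intro!: cont_sh_sub)
  have Einv: "sh d ` {z\<in>Z. \<forall>n. sh n z \<notin> W} \<subseteq> {z\<in>Z. \<forall>n. sh n z \<notin> W}" for d W
    using inv by (auto simp: add.commute)
  have c4: "\<exists>n::int. zit (topspace ?X) shift n ` U \<inter> V \<noteq> {}"
    if U: "openin ?X U" "U \<noteq> {}" and V: "openin ?X V" "V \<noteq> {}" for U V
  proof (rule ccontr)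
    assume no: "\<not> ?thesis"
    obtain W1 where W1: "openin shift_top W1" "U = W1 \<inter> Z" using U by (auto simp: openin_subtopology)
    obtain W2 where W2: "openin shift_top W2" "V = W2 \<inter> Z" using V by (auto simp: openin_subtopology)
    have fin: "finite {z\<in>Z. \<forall>n. sh n z \<notin> W}" if hW: "openin shift_top W" "W \<inter> Z \<noteq> {}" for W
    proof (rule ccontr)
      assume "infinite {z\<in>Z. \<forall>n. sh n z \<notin> W}"
      then have "{z\<in>Z. \<forall>n. sh n z \<notin> W} = Z"
        by (intro mini[OF _ closed_E[OF closed hW(1)] Einv]) auto
      moreover obtain z where "z \<in> W" "z \<in> Z" using hW(2) by auto
      moreover have "sh 0 z \<in> W" using \<open>z \<in> W\<close> by simp
      ultimately have "z \<in> {z\<in>Z. \<forall>n. sh n z \<notin> W}" "\<not> (\<forall>n. sh n z \<notin> W)" by (auto simp del: sh_0 intro!: exI[of _ 0])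
      then show False by simp
    qed
    have "Z \<subseteq> {z\<in>Z. \<forall>n. sh n z \<notin> W1} \<union> {z\<in>Z. \<forall>n. sh n z \<notin> W2}"
    proof
      fix z assume z: "z \<in> Z"
      show "z \<in> {z\<in>Z. \<forall>n. sh n z \<notin> W1} \<union> {z\<in>Z. \<forall>n. sh n z \<notin> W2}"
      proof (rule ccontr)
        assume "\<not> ?thesis"
        then obtain a b where ab: "sh a z \<in> W1" "sh b z \<in> W2" using z by auto
        have u: "sh a z \<in> U" using ab(1) W1(2) invp[OF z] by simp
        have "sh (b - a) (sh a z) = sh b z" by simp
        then have "sh (b - a) (sh a z) \<in> V" using ab(2) W2(2) invp[OF z] by simp
        moreover have "zit (topspace ?X) shift (b - a) (sh a z) = sh (b - a) (sh a z)"
          unfolding ts by (rule zit[OF invp[OF z]])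
        ultimately have "sh (b - a) (sh a z) \<in> zit (topspace ?X) shift (b - a) ` U \<inter> V"
          using u by (metis IntI image_eqI)
        then show False using no by blast
      qed
    qed
    moreover have "finite {z\<in>Z. \<forall>n. sh n z \<notin> W1}" using fin[OF W1(1)] W1(2) U(2) by simp
    moreover have "finite {z\<in>Z. \<forall>n. sh n z \<notin> W2}" using fin[OF W2(1)] W2(2) V(2) by simp
    ultimately have "finite Z" by (meson finite_UnI finite_subset)
    then show False using inf by simp
  qed
  have c5: "n = 0" if "\<forall>x\<in>topspace ?X. zit (topspace ?X) shift n x = x" for n
  proof (rule ccontr)
    assume "n \<noteq> 0"
    have "Z \<subseteq> {x. sh \<bar>n\<bar> x = x}"
    proof
      fix x assume "x \<in> Z"
      then have "zit Z shift n x = x" using that by simp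
      then have e: "sh n x = x" using zit[OF \<open>x \<in> Z\<close>] by simp
      have "sh (-n) x = x" by (metis e inv_sh)
      then show "x \<in> {x. sh \<bar>n\<bar> x = x}" using e by (cases "n \<ge> 0") auto
    qed
    moreover have "finite {x :: int \<Rightarrow> 'a. sh \<bar>n\<bar> x = x}" using finite_periodic[of "\<bar>n\<bar>"] \<open>n \<noteq> 0\<close> by simp
    ultimately show False using inf finite_subset by blast
  qed
  have c6: "?X closure_of {x \<in> topspace ?X. finite (range (\<lambda>n. zit (topspace ?X) shift n x))} = topspace ?X"
  proof
    show "?X closure_of {x \<in> topspace ?X. finite (range (\<lambda>n. zit (topspace ?X) shift n x))} \<subseteq> topspace ?X"
      by (rule closure_of_subset_topspace)
    show "topspace ?X \<subseteq> ?X closure_of {x \<in> topspace ?X. finite (range (\<lambda>n. zit (topspace ?X) shift n x))}"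
    proof
      fix x assume x: "x \<in> topspace ?X"
      show "x \<in> ?X closure_of {x \<in> topspace ?X. finite (range (\<lambda>n. zit (topspace ?X) shift n x))}"
        unfolding in_closure_of
      proof (intro conjI allI impI, fact x)
        fix T assume T: "x \<in> T \<and> openin ?X T"
        then obtain W where W: "openin shift_top W" "T = W \<inter> Z" by (auto simp: openin_subtopology)
        obtain y P where y: "y \<in> Z" "y \<in> W" "P > 0" "sh P y = y" using perd[of x W] x T W by auto
        have "range (\<lambda>n. zit Z shift n y) \<subseteq> (\<lambda>j. sh j y) ` {0..<P}"
        proof
          fix z assume "z \<in> range (\<lambda>n. zit Z shift n y)"
          then obtain n where "z = zit Z shift n y" by auto
          then have n: "z = sh n y" using zit[OF y(1)] by simp
          have "sh (P * (n div P)) y = y" using sh_period_mult[OF y(4)] by metis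
          have "n mod P + P * (n div P) = n" by (rule mod_mult_div_eq)
          then have "sh n y = sh (n mod P) (sh (P * (n div P)) y)"
            by simp
          also have "\<dots> = sh (n mod P) y" using \<open>sh (P * (n div P)) y = y\<close> by simp
          finally show "z \<in> (\<lambda>j. sh j y) ` {0..<P}" using n y(3) by auto
        qed
        then have "finite (range (\<lambda>n. zit Z shift n y))" using finite_subset by blast
        then show "\<exists>y. y \<in> {x \<in> topspace ?X. finite (range (\<lambda>n. zit (topspace ?X) shift n x))} \<and> y \<in> T"
          using y W by auto
      qed
    qed
  qed
  have c7: "finite C" if "closedin ?X C" "shift ` C = C" "C \<noteq> topspace ?X" for C
  proof (rule ccontr)
    assume "infinite C"
    have "C \<subseteq> Z" using closedin_subset[OF that(1)] by simp
    moreover have "closedin shift_top C" by (rule closedin_trans_full[OF that(1) closed])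
    ultimately have "C = Z" by (rule mini[of C, OF _ _ shift_inv_all[OF that(2)] \<open>infinite C\<close>])
    then show False using that(3) by simp
  qed
  show ?thesis unfolding CAM_system_def
    apply (intro conjI)
    using c1 c2 c3 c6 apply (simp_all only:)
    using c4 apply blast
    using c5 apply blast
    using c7 apply blast
    done
qed



fun A :: "nat \<Rightarrow> bool list" where
  "A 0 = [True]"
| "A (Suc k) = A k @ replicate (Suc k) False @ A k @
     concat (map (\<lambda>j. concat (replicate (Suc k) (A j)) @ A k) [0..<Suc k])"

definition sub :: "'b list \<Rightarrow> 'b list \<Rightarrow> bool" where
  "sub u w \<longleftrightarrow> (\<exists>p q. w = p @ u @ q)"

lemma sub_trans: "sub u v \<Longrightarrow> sub v w \<Longrightarrow> sub u w"
  unfolding sub_def by (metis append.assoc)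

lemma sub_take_drop: "sub (take n (drop a w)) w"
  unfolding sub_def by (metis append_take_drop_id)

lemma sub_refl: "sub u u" unfolding sub_def by (metis append.left_neutral append.right_neutral)

lemma sub_concat_map: "x \<in> set xs \<Longrightarrow> sub (g x) (concat (map g xs))"
proof -
  assume "x \<in> set xs"
  then obtain ys zs where "xs = ys @ x # zs" by (meson split_list)
  then show ?thesis unfolding sub_def by auto
qed

lemma A_len: "length (A k) > 0"
  by (induction k) auto

lemma A_ne: "A k \<noteq> []" using A_len[of k] by auto

lemma A_nth0: "A k ! 0 = True"
  by (induction k) (simp_all add: nth_append A_len A_ne)

lemma sub_A_Suc: "sub (A k) (A (Suc k))"
  unfolding sub_def by (rule exI[of _ "[]"]) auto

lemma sub_A_mono: "k \<le> j \<Longrightarrow> sub (A k) (A j)"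
proof (induction j)
  case 0 then show ?case by (simp add: sub_refl)
next
  case (Suc j)
  show ?case
  proof (cases "k = Suc j")
    case True then show ?thesis by (simp add: sub_refl)
  next
    case False then show ?thesis using Suc sub_trans sub_A_Suc by fastforce
  qed
qed

lemma len_rep: "length (concat (replicate r u)) = r * length u"
  by (induction r) auto

lemma rep_nth: "t < r * length u \<Longrightarrow> concat (replicate r u) ! t = u ! (t mod length u)"
proof (induction r arbitrary: t)
  case 0 then show ?case by simp
next
  case (Suc r)
  show ?case
  proof (cases "t < length u")
    case True then show ?thesis by (simp add: nth_append)
  next
    case False
    then have "concat (replicate (Suc r) u) ! t = concat (replicate r u) ! (t - length u)"
      by (simp add: nth_append)
    also have "\<dots> = u ! ((t - length u) mod length u)" using Suc False by (intro Suc.IH) auto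
    also have "(t - length u) mod length u = t mod length u" using False by (simp add: le_mod_geq)
    finally show ?thesis .
  qed
qed

lemma sub_rep: "sub (concat (replicate r u)) (concat (replicate n u))" if "r \<le> n"
proof -
  have "concat (replicate n u) = concat (replicate r u) @ concat (replicate (n - r) u)"
    using that by (metis concat_append le_add_diff_inverse replicate_add)
  then show ?thesis unfolding sub_def by (metis append_Nil)
qed

lemma sub_rep_A: "k \<le> j \<Longrightarrow> r \<le> Suc j \<Longrightarrow> sub (concat (replicate r (A k))) (A (Suc j))"
proof -
  assume kj: "k \<le> j" and r: "r \<le> Suc j"
  let ?g = "\<lambda>i. concat (replicate (Suc j) (A i)) @ A j"
  have "sub (?g k) (concat (map ?g [0..<Suc j]))" using kj by (intro sub_concat_map) auto
  moreover have "sub (concat (map ?g [0..<Suc j])) (A (Suc j))" unfolding sub_def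
    by (rule exI[of _ "A j @ replicate (Suc j) False @ A j"], rule exI[of _ "[]"]) simp
  moreover have "sub (concat (replicate (Suc j) (A k))) (?g k)" unfolding sub_def
    by (rule exI[of _ "[]"], rule exI[of _ "A j"]) simp
  moreover have "sub (concat (replicate r (A k))) (concat (replicate (Suc j) (A k)))"
    using r by (rule sub_rep)
  ultimately show ?thesis using sub_trans by metis
qed

definition Dk :: "nat \<Rightarrow> nat" where "Dk k = (\<Prod>i<k. length (A i))"

lemma Dk_pos: "Dk k > 0" unfolding Dk_def using A_len by (simp add: prod_pos)

lemma Dk_dvd: "i < k \<Longrightarrow> length (A i) dvd Dk k"
  unfolding Dk_def by (rule dvd_prodI) auto

definition perD :: "nat \<Rightarrow> 'b list \<Rightarrow> bool" where
  "perD D g \<longleftrightarrow> (\<forall>i. i + D < length g \<longrightarrow> g ! (i + D) = g ! i)"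

inductive dec :: "nat \<Rightarrow> bool list \<Rightarrow> bool" for k where
  base: "dec k (A k)"
| gap: "dec k w1 \<Longrightarrow> dec k w2 \<Longrightarrow> perD (Dk k) g \<Longrightarrow> dec k (w1 @ g @ w2)"

lemma dec_props: "dec k w \<Longrightarrow> length (A k) \<le> length w \<and> take (length (A k)) w = A k \<and>
    drop (length w - length (A k)) w = A k"
  by (induction rule: dec.induct) auto

lemma dec_app: "dec k w1 \<Longrightarrow> dec k w2 \<Longrightarrow> dec k (w1 @ w2)"
  using dec.gap[of k w1 w2 "[]"] by (simp add: perD_def)

lemma dec_rep: "dec k u \<Longrightarrow> dec k (concat (replicate (Suc r) u))"
proof (induction r)
  case 0 then show ?case by simp
next
  case (Suc r)
  then show ?case using dec_app[of k u "concat (replicate (Suc r) u)"] by simp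
qed

lemma perD_rep: "length u dvd D \<Longrightarrow> u \<noteq> [] \<Longrightarrow> perD D (concat (replicate r u))"
  unfolding perD_def
proof (intro allI impI)
  fix i assume d: "length u dvd D" "u \<noteq> []" and i: "i + D < length (concat (replicate r u))"
  have "concat (replicate r u) ! (i + D) = u ! ((i + D) mod length u)"
    using i by (intro rep_nth) (simp add: len_rep)
  also have "(i + D) mod length u = i mod length u" using d(1) by (simp add: mod_add_right_eq[symmetric])
  also have "u ! (i mod length u) = concat (replicate r u) ! i"
    using i by (intro rep_nth[symmetric]) (simp add: len_rep)
  finally show "concat (replicate r u) ! (i + D) = concat (replicate r u) ! i" .
qed

lemma perD_F: "perD D (replicate m False)" unfolding perD_def by simp

lemma dec_concat:
  assumes "dec k w" "\<And>x v. x \<in> set xs \<Longrightarrow> dec k v \<Longrightarrow> dec k (v @ g x)"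
  shows "dec k (w @ concat (map g xs))"
  using assms
proof (induction xs arbitrary: w)
  case Nil then show ?case by simp
next
  case (Cons x xs)
  have "dec k (w @ g x)" using Cons.prems by auto
  then have "dec k ((w @ g x) @ concat (map g xs))" using Cons.prems(2) by (intro Cons.IH) auto
  then show ?case by simp
qed

lemma dec_A_all: "\<forall>i\<le>j. k \<le> i \<longrightarrow> dec k (A i)"
proof (induction j)
  case 0 then show ?case using dec.base[of 0] by auto
next
  case (Suc j)
  show ?case
  proof (intro allI impI)
    fix i assume i: "i \<le> Suc j" "k \<le> i"
    show "dec k (A i)"
    proof (cases "i \<le> j")
      case True then show ?thesis using Suc i by auto
    next
      case False
      then have ij: "i = Suc j" using i by simp
      show ?thesis
      proof (cases "k = Suc j")
        case True show ?thesis unfolding ij True[symmetric] by (rule dec.base)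
      next
        case False
        then have kj: "k \<le> j" using i ij by simp
        have Aj: "dec k (A j)" using Suc kj by auto
        let ?g = "\<lambda>x. concat (replicate (Suc j) (A x)) @ A j"
        have "dec k (A j @ concat (map ?g [0..<Suc j]))"
        proof (rule dec_concat[OF Aj])
          fix x v assume x: "x \<in> set [0..<Suc j]" and v: "dec k v"
          show "dec k (v @ ?g x)"
          proof (cases "x < k")
            case True
            have "perD (Dk k) (concat (replicate (Suc j) (A x)))"
              using Dk_dvd[OF True] A_len[of x] by (intro perD_rep) auto
            from dec.gap[OF v Aj this] show ?thesis by simp
          next
            case False
            then have "dec k (A x)" using Suc x by auto
            then have "dec k (concat (replicate (Suc j) (A x)))" by (rule dec_rep)
            from dec_app[OF v dec_app[OF this Aj]] show ?thesis by simp
          qed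
        qed
        then have "dec k (A j @ replicate (Suc j) False @ (A j @ concat (map ?g [0..<Suc j])))"
          using dec.gap[OF Aj _ perD_F] by blast
        then show ?thesis using ij by simp
      qed
    qed
  qed
qed

lemma dec_A: "k \<le> j \<Longrightarrow> dec k (A j)" using dec_A_all by blast



lemma dec_avoid:
  assumes "dec k w" "a + m \<le> length w"
   "\<forall>j. a \<le> j \<and> j + length (A k) \<le> a + m \<longrightarrow> take (length (A k)) (drop j w) \<noteq> A k"
   "a + length (A k) \<le> i" "i + Dk k + length (A k) < a + m"
  shows "w ! (i + Dk k) = w ! i"
  using assms
proof (induction arbitrary: a m i rule: dec.induct)
  case base
  then show ?case by simp
next
  case (gap w1 w2 g)
  let ?b = "length (A k)" and ?D = "Dk k" and ?l = "length w1" and ?lg = "length g"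
  have w: "w1 @ g @ w2 = (w1 @ g) @ w2" by simp
  show ?case
  proof (cases "a + m \<le> ?l")
    case True
    have "w1 ! (i + ?D) = w1 ! i"
    proof (rule gap.IH(1)[of a m])
      show "a + m \<le> ?l" by fact
      show "\<forall>j. a \<le> j \<and> j + ?b \<le> a + m \<longrightarrow> take ?b (drop j w1) \<noteq> A k"
      proof (intro allI impI)
        fix j assume j: "a \<le> j \<and> j + ?b \<le> a + m"
        then have "take ?b (drop j (w1 @ g @ w2)) = take ?b (drop j w1)" using True by simp
        then show "take ?b (drop j w1) \<noteq> A k" using gap.prems(2) j by metis
      qed
    qed (use gap.prems in auto)
    then show ?thesis using True gap.prems by (simp add: nth_append)
  next
    case False
    note F1 = False
    show ?thesis
    proof (cases "?l + ?lg \<le> a")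
      case True
      have "w2 ! (i - ?l - ?lg + ?D) = w2 ! (i - ?l - ?lg)"
      proof (rule gap.IH(2)[of "a - ?l - ?lg" m])
        show "a - ?l - ?lg + m \<le> length w2" using True gap.prems by simp
        show "\<forall>j. a - ?l - ?lg \<le> j \<and> j + ?b \<le> a - ?l - ?lg + m \<longrightarrow> take ?b (drop j w2) \<noteq> A k"
        proof (intro allI impI)
          fix j assume j: "a - ?l - ?lg \<le> j \<and> j + ?b \<le> a - ?l - ?lg + m"
          have "take ?b (drop (j + ?l + ?lg) (w1 @ g @ w2)) = take ?b (drop j w2)"
            by (simp add: w del: append_assoc)
          moreover have "a \<le> j + ?l + ?lg \<and> j + ?l + ?lg + ?b \<le> a + m" using j True by arith
          ultimately show "take ?b (drop j w2) \<noteq> A k" using gap.prems(2) by metis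
        qed
      qed (use gap.prems True in auto)
      moreover have "i - ?l - ?lg + ?D = (i + ?D) - ?l - ?lg" using True gap.prems by simp
      ultimately show ?thesis using True gap.prems
        by (simp add: nth_append w del: append_assoc)
    next
      case False
      have p1: "take ?b w2 = A k" "drop (?l - ?b) w1 = A k" "?b \<le> ?l"
        using dec_props[OF gap.hyps(1)] dec_props[OF gap.hyps(2)] by auto
      have c1: "?l < a + ?b"
      proof (rule ccontr)
        assume "\<not> ?thesis"
        then have "a \<le> ?l - ?b" "?l - ?b + ?b \<le> a + m" using F1 p1 by auto
        moreover have "take ?b (drop (?l - ?b) (w1 @ g @ w2)) = A k"
          using p1 by simp
        ultimately show False using gap.prems(2) by blast
      qed
      have c2: "a + m < ?l + ?lg + ?b"
      proof (rule ccontr)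
        assume "\<not> ?thesis"
        then have "a \<le> ?l + ?lg" "?l + ?lg + ?b \<le> a + m" using False by auto
        moreover have "take ?b (drop (?l + ?lg) (w1 @ g @ w2)) = A k"
          using p1 by (simp add: w del: append_assoc)
        ultimately show False using gap.prems(2) by blast
      qed
      have i1: "?l \<le> i" "i + ?D < ?l + ?lg" using c1 c2 gap.prems by auto
      then have "i - ?l + ?D < ?lg" by arith
      with gap.hyps(3) have "g ! (i - ?l + ?D) = g ! (i - ?l)" unfolding perD_def by blast
      moreover have "i - ?l + ?D = i + ?D - ?l" using i1 by simp
      moreover have "i - ?l < ?lg" "i + ?D - ?l < ?lg" "\<not> i < ?l" "\<not> i + ?D < ?l" using i1 by arith+
      ultimately show ?thesis using i1 by (simp add: nth_append)
    qed
  qed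
qed



definition win :: "(int \<Rightarrow> 'b) \<Rightarrow> nat \<Rightarrow> 'b list" where
  "win x N = map (\<lambda>t. x (int t - int N)) [0..<2*N+1]"

definition Cset :: "(int \<Rightarrow> bool) set" where
  "Cset = {x. \<forall>N. \<exists>j. sub (win x N) (A j)}"

lemma win_len [simp]: "length (win x N) = 2*N+1" by (simp add: win_def)
lemma win_nth: "t < 2*N+1 \<Longrightarrow> win x N ! t = x (int t - int N)" by (simp add: win_def nth_map_upt del: upt_Suc)

lemma win_eq_cyl: "win y N = win x N \<longleftrightarrow> y \<in> cyl x (int N)"
proof
  assume e: "win y N = win x N"
  show "y \<in> cyl x (int N)" unfolding cyl_def
  proof (intro CollectI allI impI)
    fix i assume i: "\<bar>i\<bar> \<le> int N"
    define t where "t = nat (i + int N)"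
    have t: "t < 2*N+1" "int t - int N = i" using i by (auto simp: t_def)
    show "y i = x i" using win_nth[OF t(1), of y] win_nth[OF t(1), of x] e t(2) by simp
  qed
next
  assume "y \<in> cyl x (int N)"
  then show "win y N = win x N" unfolding cyl_def
    by (intro nth_equalityI) (auto simp: win_nth)
qed

lemma C_sh: assumes "x \<in> Cset" shows "sh d x \<in> Cset"
  unfolding Cset_def
proof (intro CollectI allI)
  fix N :: nat
  define M where "M = N + nat \<bar>d\<bar>"
  obtain j where j: "sub (win x M) (A j)" using assms unfolding Cset_def by blast
  define s where "s = nat (int M - int N + d)"
  have s: "s + (2*N+1) \<le> 2*M+1" "int s = int M - int N + d" unfolding s_def M_def by auto
  have "win (sh d x) N = take (2*N+1) (drop s (win x M))"
  proof (rule nth_equalityI)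
    show "length (win (sh d x) N) = length (take (2*N+1) (drop s (win x M)))" using s by simp
    fix t assume "t < length (win (sh d x) N)"
    then have t: "t < 2*N+1" by simp
    have e: "int (s + t) - int M = int t - int N + d" using s by simp
    have "take (2*N+1) (drop s (win x M)) ! t = win x M ! (s + t)" using t s by simp
    also have "\<dots> = x (int (s + t) - int M)" using t s by (intro win_nth) simp
    also have "\<dots> = sh d x (int t - int N)" by (simp only: sh_apply e)
    finally show "win (sh d x) N ! t = take (2*N+1) (drop s (win x M)) ! t" using win_nth[OF t] by simp
  qed
  then show "\<exists>j. sub (win (sh d x) N) (A j)" using j sub_take_drop sub_trans by metis
qed

lemma Cset_closed: "closedin shift_top Cset"
  unfolding closedin_def
proof
  show "Cset \<subseteq> topspace shift_top" by simp
  show "openin shift_top (topspace shift_top - Cset)"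
  proof (subst openin_subopen, intro ballI)
    fix x assume "x \<in> topspace shift_top - Cset"
    then obtain N where N: "\<forall>j. \<not> sub (win x N) (A j)" unfolding Cset_def by auto
    have "cyl x (int N) \<subseteq> topspace shift_top - Cset"
    proof
      fix y assume "y \<in> cyl x (int N)"
      then have "win y N = win x N" using win_eq_cyl by blast
      then have "\<not> (\<exists>j. sub (win y N) (A j))" using N by simp
      then show "y \<in> topspace shift_top - Cset" unfolding Cset_def by auto
    qed
    moreover have "x \<in> cyl x (int N)" by (simp add: cyl_def)
    ultimately show "\<exists>T. openin shift_top T \<and> x \<in> T \<and> T \<subseteq> topspace shift_top - Cset"
      using openin_cyl by blast
  qed
qed

definition perA :: "nat \<Rightarrow> int \<Rightarrow> bool" where
  "perA j = (\<lambda>i. A j ! nat (i mod int (length (A j))))"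

lemma perA_period: "sh (int (length (A j))) (perA j) = perA j"
  by (simp add: perA_def sh_def)

lemma perA_C: "perA j \<in> Cset"
  unfolding Cset_def
proof (intro CollectI allI)
  fix N :: nat
  let ?u = "A j" let ?l = "length (A j)"
  have l: "?l > 0" by (rule A_len)
  define r where "r = 2*N+2"
  define s where "s = nat ((- int N) mod int ?l)"
  have s: "s < ?l" "int s = (- int N) mod int ?l" unfolding s_def using l
    by (auto simp: nat_less_iff)
  have rl: "s + (2*N+1) \<le> r * ?l"
  proof -
    have "1 \<le> ?l" using l by linarith
    then have X: "(2*N+1) * 1 \<le> (2*N+1) * ?l" by (rule mult_le_mono2)
    have e: "r * ?l = ?l + (2*N+1) * ?l" unfolding r_def by (simp add: algebra_simps)
    have "s + (2*N+1) * 1 \<le> ?l + (2*N+1) * ?l" using s(1) X by (intro add_le_mono) auto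
    then show ?thesis unfolding e by (simp only: mult_1_right)
  qed
  have "win (perA j) N = take (2*N+1) (drop s (concat (replicate r ?u)))"
  proof (rule nth_equalityI)
    show "length (win (perA j) N) = length (take (2*N+1) (drop s (concat (replicate r ?u))))"
      using rl by (simp add: len_rep)
    fix t assume "t < length (win (perA j) N)"
    then have t: "t < 2*N+1" by simp
    have "take (2*N+1) (drop s (concat (replicate r ?u))) ! t = concat (replicate r ?u) ! (s + t)"
      using t rl by (simp add: len_rep)
    also have "\<dots> = ?u ! ((s + t) mod ?l)" using t rl by (intro rep_nth) simp
    also have "(s + t) mod ?l = nat ((int t - int N) mod int ?l)"
    proof -
      have "int ((s + t) mod ?l) = (int s + int t) mod int ?l" by (simp add: zmod_int)
      also have "\<dots> = ((- int N) mod int ?l + int t) mod int ?l" using s by simp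
      also have "\<dots> = (int t - int N) mod int ?l" by (simp add: mod_add_left_eq)
      finally show ?thesis by simp
    qed
    finally show "win (perA j) N ! t = take (2*N+1) (drop s (concat (replicate r ?u))) ! t"
      using win_nth[OF t] by (simp add: perA_def)
  qed
  moreover have "sub (concat (replicate r ?u)) (A (Suc (max j r)))"
    by (rule sub_rep_A) auto
  ultimately have "sub (win (perA j) N) (A (Suc (max j r)))"
    using sub_trans[OF sub_take_drop] by metis
  then show "\<exists>j'. sub (win (perA j) N) (A j')" by blast
qed

lemma Cset_per_dense:
  assumes "x \<in> Cset"
  shows "\<exists>y\<in>Cset. y \<in> cyl x (int N) \<and> (\<exists>P>0. sh P y = y)"
proof -
  obtain j where "sub (win x N) (A j)" using assms unfolding Cset_def by blast
  then obtain p q where pq: "A j = p @ win x N @ q" unfolding sub_def by blast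
  let ?l = "length (A j)"
  define y where "y = sh (int (length p) + int N) (perA j)"
  have yC: "y \<in> Cset" unfolding y_def by (rule C_sh[OF perA_C])
  have "sh (int ?l) y = sh (int (length p) + int N) (sh (int ?l) (perA j))"
    unfolding y_def by (simp add: add_ac)
  then have per: "sh (int ?l) y = y" unfolding y_def perA_period by simp
  have "win y N = win x N"
  proof (rule nth_equalityI)
    fix t assume "t < length (win y N)"
    then have t: "t < 2*N+1" by simp
    have lt: "length p + t < ?l" using pq t by simp
    have "win y N ! t = perA j (int t + int (length p))"
      by (simp add: win_nth[OF t] y_def sh_apply algebra_simps)
    also have "\<dots> = A j ! (length p + t)"
      unfolding perA_def using lt
      by (simp add: add.commute nat_add_distrib flip: of_nat_add)
    also have "\<dots> = win x N ! t" using pq t by (simp add: nth_append)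
    finally show "win y N ! t = win x N ! t" .
  qed simp
  then have "y \<in> cyl x (int N)" using win_eq_cyl by blast
  moreover have "int ?l > 0" using A_len[of j] by simp
  ultimately show ?thesis using yC per by blast
qed



lemma fin_common_period:
  fixes S :: "(int \<Rightarrow> 'a) set"
  assumes "finite S" "\<And>d. sh d ` S \<subseteq> S"
  shows "\<exists>P>0. \<forall>x\<in>S. sh P x = x"
proof -
  have ex: "\<exists>P>0. sh P x = x" if x: "x \<in> S" for x
  proof -
    have "range (\<lambda>n::nat. sh (int n) x) \<subseteq> S" using assms(2) x by blast
    then have "finite (range (\<lambda>n::nat. sh (int n) x))" using assms(1) finite_subset by blast
    then have "\<not> inj (\<lambda>n::nat. sh (int n) x)" using finite_imageD infinite_UNIV_nat by blast
    then obtain a b :: nat where ab: "a \<noteq> b" "sh (int a) x = sh (int b) x" unfolding inj_def by blast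
    have gen: "sh (int b - int a) x = x" if "sh (int a) x = sh (int b) x" for a b :: nat
    proof -
      have "sh (- int a) (sh (int b) x) = sh (- int a) (sh (int a) x)" using that by simp
      then show ?thesis by simp
    qed
    show ?thesis
    proof (cases "a < b")
      case True then show ?thesis using gen[OF ab(2)] by (intro exI[of _ "int b - int a"]) auto
    next
      case False then have "b < a" using ab(1) by simp
      then show ?thesis using gen[OF ab(2)[symmetric]] by (intro exI[of _ "int a - int b"]) auto
    qed
  qed
  define per :: "(int \<Rightarrow> 'a) \<Rightarrow> int" where "per x = (SOME P. P > 0 \<and> sh P x = x)" for x
  have per: "per x > 0 \<and> sh (per x) x = x" if "x \<in> S" for x
    unfolding per_def using someI_ex[OF ex[OF that]] .
  define P where "P = (\<Prod>x\<in>S. per x)"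
  have "P > 0" unfolding P_def using per by (intro prod_pos) auto
  moreover have "sh P x = x" if "x \<in> S" for x
  proof -
    have "per x dvd P" unfolding P_def using assms(1) that by (rule dvd_prodI)
    then obtain q where "P = per x * q" by blast
    then show ?thesis using sh_period_mult[of "per x" x q] per[OF that] by simp
  qed
  ultimately show ?thesis by blast
qed

lemma Cset_inf: "infinite Cset"
proof
  assume fin: "finite Cset"
  obtain P where P: "P > 0" "\<forall>x\<in>Cset. sh P x = x"
    using fin_common_period[OF fin] C_sh by blast
  define k where "k = nat P"
  let ?x = "perA (Suc k)"
  let ?l = "length (A k)"
  define i where "i = ?l + Suc k - nat P"
  have Pk: "nat P \<le> Suc k" "1 \<le> nat P" using P(1) unfolding k_def by auto
  have len: "i + nat P < length (A (Suc k))" "i < length (A (Suc k))"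
    unfolding i_def using Pk A_len[of k] by auto
  have "A (Suc k) ! i = False"
  proof -
    have "A (Suc k) = A k @ (replicate (Suc k) False @ (A k @ concat (map (\<lambda>j. concat (replicate (Suc k) (A j)) @ A k) [0..<Suc k])))"
      by simp
    moreover have "\<not> i < ?l" "i - ?l < Suc k" unfolding i_def using Pk by auto
    ultimately show ?thesis by (simp add: nth_append del: replicate_Suc)
  qed
  moreover have "A (Suc k) ! (i + nat P) = True"
  proof -
    have e: "i + nat P = ?l + Suc k" unfolding i_def using Pk by simp
    have "A (Suc k) = (A k @ replicate (Suc k) False) @ (A k @ concat (map (\<lambda>j. concat (replicate (Suc k) (A j)) @ A k) [0..<Suc k]))"
      by simp
    then show ?thesis unfolding e by (simp only: nth_append) (simp add: A_nth0 A_len A_ne)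
  qed
  moreover have "?x (int i) = A (Suc k) ! i" "?x (int i + P) = A (Suc k) ! (i + nat P)"
    unfolding perA_def using len P(1) by (auto simp: nat_add_distrib)
  moreover have "sh P ?x (int i) = ?x (int i + P)" by (simp add: sh_apply)
  ultimately have "sh P ?x (int i) \<noteq> ?x (int i)" by simp
  then have "sh P ?x \<noteq> ?x" by metis
  then show False using P(2) perA_C by blast
qed

lemma Cset_avoid:
  assumes x: "x \<in> Cset" and av: "\<not> (\<exists>c. \<forall>t<length (A k). x (c + int t) = A k ! t)"
  shows "sh (int (Dk k)) x = x"
proof
  fix t :: int
  let ?b = "length (A k)" and ?D = "Dk k"
  define M where "M = nat \<bar>t\<bar> + ?D + ?b + 1"
  obtain j where j: "sub (win x M) (A j)" using x unfolding Cset_def by blast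
  have "sub (win x M) (A (max j k))" using sub_trans[OF j sub_A_mono[of j "max j k"]] by simp
  then obtain p q where pq: "A (max j k) = p @ win x M @ q" unfolding sub_def by blast
  let ?w = "A (max j k)" and ?a = "length p" and ?m = "2*M+1"
  have dw: "dec k ?w" by (rule dec_A) simp
  have lw: "?a + ?m \<le> length ?w" using pq by simp
  define s where "s = nat (t + int M)"
  have s: "int s = t + int M" "?b \<le> s" "s + ?D + ?b < ?m" unfolding s_def M_def by auto
  have "?w ! (?a + s + ?D) = ?w ! (?a + s)"
  proof (rule dec_avoid[OF dw, of ?a ?m])
    show "?a + ?m \<le> length ?w" using pq by simp
    show "\<forall>ja. ?a \<le> ja \<and> ja + ?b \<le> ?a + ?m \<longrightarrow> take ?b (drop ja ?w) \<noteq> A k"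
    proof (intro allI impI)
      fix ja assume ja: "?a \<le> ja \<and> ja + ?b \<le> ?a + ?m"
      show "take ?b (drop ja ?w) \<noteq> A k"
      proof
        assume occ: "take ?b (drop ja ?w) = A k"
        have "\<forall>tt<?b. x (int ja - int ?a - int M + int tt) = A k ! tt"
        proof (intro allI impI)
          fix tt assume tt: "tt < ?b"
          have ar: "ja + tt - ?a < 2*M+1" "\<not> ja + tt < ?a" using ja tt by arith+
          have "A k ! tt = take ?b (drop ja ?w) ! tt" using occ by simp
          also have "\<dots> = ?w ! (ja + tt)" using tt ja lw by simp
          also have "\<dots> = win x M ! (ja - ?a + tt)" using pq ja ar by (simp add: nth_append)
          also have "\<dots> = x (int (ja - ?a + tt) - int M)" using ja tt ar by (intro win_nth) simp
          also have "int (ja - ?a + tt) - int M = int ja - int ?a - int M + int tt" using ja by simp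
          finally show "x (int ja - int ?a - int M + int tt) = A k ! tt" by simp
        qed
        then show False using av by blast
      qed
    qed
    show "?a + ?b \<le> ?a + s" using s by simp
    show "?a + s + ?D + ?b < ?a + ?m" using s by simp
  qed
  moreover have "?w ! (?a + s) = x t"
  proof -
    have "?w ! (?a + s) = win x M ! s" using pq s by (simp add: nth_append)
    also have "\<dots> = x (int s - int M)" using s by (intro win_nth) simp
    finally show ?thesis using s by simp
  qed
  moreover have "?w ! (?a + s + ?D) = x (t + int ?D)"
  proof -
    have "?w ! (?a + s + ?D) = win x M ! (s + ?D)" using pq s by (simp add: nth_append add.assoc)
    also have "\<dots> = x (int (s + ?D) - int M)" using s by (intro win_nth) simp
    finally show ?thesis using s by simp
  qed
  ultimately show "sh (int ?D) x t = x t" by (simp add: sh_apply)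
qed



lemma cyl_nat: "cyl x (int (nat N)) \<subseteq> cyl x N"
  unfolding cyl_def by auto

lemma C_min:
  assumes sub: "D \<subseteq> Cset" and cl: "closedin shift_top D" and inv: "\<And>d. sh d ` D \<subseteq> D"
    and inf: "infinite D"
  shows "D = Cset"
proof
  show "D \<subseteq> Cset" by fact
  have ex: "\<exists>y\<in>D. \<exists>c. \<forall>t<length (A k). y (c + int t) = A k ! t" for k
  proof (rule ccontr)
    assume "\<not> ?thesis"
    then have nav: "\<not> (\<exists>c. \<forall>t<length (A k). y (c + int t) = A k ! t)" if "y \<in> D" for y
      using that by blast
    have "D \<subseteq> {x. sh (int (Dk k)) x = x}"
    proof
      fix y assume "y \<in> D"
      then show "y \<in> {x. sh (int (Dk k)) x = x}"
        using Cset_avoid[OF subsetD[OF sub \<open>y \<in> D\<close>] nav[OF \<open>y \<in> D\<close>]] by simp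
    qed
    moreover have "finite {x :: int \<Rightarrow> bool. sh (int (Dk k)) x = x}"
      using Dk_pos[of k] by (intro finite_periodic) simp
    ultimately show False using inf finite_subset by blast
  qed
  show "Cset \<subseteq> D"
  proof
    fix x assume x: "x \<in> Cset"
    show "x \<in> D"
    proof (rule closed_compl_open[OF cl])
      show "x \<in> topspace shift_top" by simp
      fix W assume W: "openin shift_top W" "x \<in> W"
      obtain N' where "cyl x N' \<subseteq> W" using openin_cyl_sub[OF W] by blast
      then have NW: "cyl x (int N) \<subseteq> W" if "N = nat N'" for N using cyl_nat that by blast
      define N where "N = nat N'"
      obtain j where "sub (win x N) (A j)" using x unfolding Cset_def by blast
      then obtain p q where pq: "A j = p @ win x N @ q" unfolding sub_def by blast
      obtain y c where y: "y \<in> D" "\<forall>t<length (A j). y (c + int t) = A j ! t" using ex[of j] by blast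
      define y' where "y' = sh (c + int (length p) + int N) y"
      have y'D: "y' \<in> D" unfolding y'_def by (rule subsetD[OF inv imageI[OF y(1)]])
      have "win y' N = win x N"
      proof (rule nth_equalityI)
        fix t assume "t < length (win y' N)"
        then have t: "t < 2*N+1" by simp
        have lt: "length p + t < length (A j)" using pq t by simp
        have "win y' N ! t = y (c + int (length p + t))"
          by (simp add: win_nth[OF t] y'_def sh_apply algebra_simps)
        also have "\<dots> = A j ! (length p + t)" using y(2) lt by blast
        also have "\<dots> = win x N ! t" using pq t by (simp add: nth_append)
        finally show "win y' N ! t = win x N ! t" .
      qed simp
      then have "y' \<in> W" using NW[OF N_def] win_eq_cyl by blast
      then show "W \<inter> D \<noteq> {}" using y'D by blast
    qed
  qed
qed



locale sft =
  fixes Y :: "(int \<Rightarrow> 'a::finite) set" and F :: "'a list set" and L :: nat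
  assumes Ydef: "Y = {x. \<forall>w\<in>F. \<forall>n. \<not> occurs_at w x n}"
    and Lbound: "\<And>w. w \<in> F \<Longrightarrow> length w \<le> L"
begin

lemma Y_local:
  assumes "\<And>n. \<exists>y\<in>Y. \<exists>d. \<forall>i. n \<le> i \<and> i < n + int L \<longrightarrow> x i = y (i + d)"
  shows "x \<in> Y"
proof -
  have "\<not> occurs_at w x n" if w: "w \<in> F" for w n
  proof
    assume occ: "occurs_at w x n"
    obtain y d where y: "y \<in> Y" "\<forall>i. n \<le> i \<and> i < n + int L \<longrightarrow> x i = y (i + d)"
      using assms[of n] by blast
    have "occurs_at w y (n + d)" unfolding occurs_at_def
    proof (intro allI impI)
      fix i assume i: "i < length w"
      then have "x (n + int i) = w ! i" using occ unfolding occurs_at_def by blast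
      moreover have "n + int i < n + int L" using i Lbound[OF w] by simp
      ultimately show "y (n + d + int i) = w ! i" using y(2)[rule_format, of "n + int i"] by (simp add: add_ac)
    qed
    then show False using y(1) w unfolding Ydef by blast
  qed
  then show ?thesis unfolding Ydef by blast
qed

lemma Y_sh: "y \<in> Y \<Longrightarrow> sh d y \<in> Y"
  by (rule Y_local) (auto simp: sh_apply)

lemma glue:
  assumes x1: "x1 \<in> Y" and x2: "x2 \<in> Y" and e1: "sh n x1 \<in> cyl e (int L)" and e2: "x2 \<in> cyl e (int L)"
  shows "(\<lambda>i. if i < n then x1 i else x2 (i - n)) \<in> Y"
proof (rule Y_local)
  fix k
  show "\<exists>y\<in>Y. \<exists>d. \<forall>i. k \<le> i \<and> i < k + int L \<longrightarrow> (if i < n then x1 i else x2 (i - n)) = y (i + d)"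
  proof (cases "n \<le> k")
    case True
    then show ?thesis using x2 by (intro bexI[of _ x2] exI[of _ "-n"]) auto
  next
    case False
    have "\<forall>i. k \<le> i \<and> i < k + int L \<longrightarrow> (if i < n then x1 i else x2 (i - n)) = x1 (i + 0)"
    proof (intro allI impI)
      fix i assume i: "k \<le> i \<and> i < k + int L"
      show "(if i < n then x1 i else x2 (i - n)) = x1 (i + 0)"
      proof (cases "i < n")
        case False
        then have "\<bar>i - n\<bar> \<le> int L" using i \<open>\<not> n \<le> k\<close> by auto
        then have "x2 (i - n) = e (i - n)" "x1 (n + (i - n)) = e (i - n)"
          using e1 e2 unfolding cyl_def by (auto simp: sh_apply add.commute)
        then show ?thesis using False by simp
      qed simp
    qed
    then show ?thesis using x1 by blast
  qed
qed

end

lemma mix_pts: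
  assumes mix: "mixing_shift Y" and c: "c \<in> Y" and a: "a \<in> Y"
  shows "\<exists>N. \<forall>n\<ge>N. \<exists>x\<in>Y. x \<in> cyl c R \<and> sh (int n) x \<in> cyl a R"
proof -
  have o: "openin (subtopology shift_top Y) (cyl u R \<inter> Y)" for u :: "int \<Rightarrow> 'a::finite"
    using openin_cyl[of u R] by (auto simp: openin_subtopology)
  have ne: "cyl u R \<inter> Y \<noteq> {}" if "u \<in> Y" for u using that by (auto simp: cyl_def)
  obtain N where N: "\<forall>n\<ge>N. (shift ^^ n) ` (cyl c R \<inter> Y) \<inter> (cyl a R \<inter> Y) \<noteq> {}"
    using mix o[of c] o[of a] ne[OF c] ne[OF a] unfolding mixing_shift_def by blast
  show ?thesis
  proof (intro exI allI impI)
    fix n assume "N \<le> n"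
    then have "(shift ^^ n) ` (cyl c R \<inter> Y) \<inter> (cyl a R \<inter> Y) \<noteq> {}" using N by blast
    then show "\<exists>x\<in>Y. x \<in> cyl c R \<and> sh (int n) x \<in> cyl a R" unfolding funpow_shift by blast
  qed
qed



context sft begin

lemma blocks:
  assumes inf: "infinite Y" and mix: "mixing_shift Y"
  shows "\<exists>z0 z1 (p::int) (c::int \<Rightarrow> 'a) m. z0 \<in> Y \<and> z1 \<in> Y \<and> int L \<le> p \<and> 0 < p \<and>
    (\<forall>i. 0 \<le> i \<and> i < int L \<longrightarrow> z0 i = c i \<and> z1 i = c i \<and> z0 (p + i) = c i \<and> z1 (p + i) = c i) \<and>
    0 \<le> m \<and> m < p \<and> z0 m \<noteq> z1 m"
proof -
  obtain y1 y2 where y: "y1 \<in> Y" "y2 \<in> Y" "y1 \<noteq> y2"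
    using inf by (metis finite.emptyI finite_insert infinite_imp_nonempty insertI1 subsetI finite_subset insert_iff)
  then obtain j where j: "y1 j \<noteq> y2 j" by blast
  define a where "a = sh j y1"
  define b where "b = sh j y2"
  have ab: "a \<in> Y" "b \<in> Y" "a 0 \<noteq> b 0" using y j Y_sh unfolding a_def b_def by (auto simp: sh_apply)
  let ?R = "int L"
  obtain N1 where N1: "\<forall>n\<ge>N1. \<exists>x\<in>Y. x \<in> cyl a ?R \<and> sh (int n) x \<in> cyl a ?R" using mix_pts[OF mix ab(1) ab(1)] by blast
  obtain N3 where N3: "\<forall>n\<ge>N3. \<exists>x\<in>Y. x \<in> cyl a ?R \<and> sh (int n) x \<in> cyl b ?R" using mix_pts[OF mix ab(1) ab(2)] by blast
  obtain N4 where N4: "\<forall>n\<ge>N4. \<exists>x\<in>Y. x \<in> cyl b ?R \<and> sh (int n) x \<in> cyl a ?R" using mix_pts[OF mix ab(2) ab(1)] by blast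
  define n where "n = max N1 N3 + L + 1"
  define m where "m = max N1 N4 + 1"
  obtain x1 where x1: "x1 \<in> Y" "x1 \<in> cyl a ?R" "sh (int n) x1 \<in> cyl a ?R" using N1 n_def by (metis le_add1 max.bounded_iff add.assoc)
  obtain x2 where x2: "x2 \<in> Y" "x2 \<in> cyl a ?R" "sh (int m) x2 \<in> cyl a ?R" using N1 m_def by (metis le_add1 max.bounded_iff)
  obtain x3 where x3: "x3 \<in> Y" "x3 \<in> cyl a ?R" "sh (int n) x3 \<in> cyl b ?R" using N3 n_def by (metis le_add1 max.bounded_iff add.assoc)
  obtain x4 where x4: "x4 \<in> Y" "x4 \<in> cyl b ?R" "sh (int m) x4 \<in> cyl a ?R" using N4 m_def by (metis le_add1 max.bounded_iff)
  define z0 where "z0 = (\<lambda>i. if i < int n then x1 i else x2 (i - int n))"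
  define z1 where "z1 = (\<lambda>i. if i < int n then x3 i else x4 (i - int n))"
  have z0Y: "z0 \<in> Y" unfolding z0_def by (rule glue[OF x1(1) x2(1) x1(3) x2(2)])
  have z1Y: "z1 \<in> Y" unfolding z1_def by (rule glue[OF x3(1) x4(1) x3(3) x4(2)])
  have nL: "int L < int n" "0 < int m" unfolding n_def m_def by auto
  define p where "p = int n + int m"
  have bl: "z0 i = a i \<and> z1 i = a i \<and> z0 (p + i) = a i \<and> z1 (p + i) = a i" if i: "0 \<le> i" "i < int L" for i
  proof -
    have ii: "\<bar>i\<bar> \<le> int L" using i by simp
    have "z0 i = x1 i" "z1 i = x3 i" using i nL unfolding z0_def z1_def by auto
    moreover have "z0 (p + i) = x2 (int m + i)" "z1 (p + i) = x4 (int m + i)"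
      using i nL unfolding z0_def z1_def p_def by (auto simp: algebra_simps)
    moreover have "x1 i = a i" "x3 i = a i" using x1(2) x3(2) ii unfolding cyl_def by auto
    moreover have "x2 (int m + i) = a i" "x4 (int m + i) = a i"
      using x2(3) x4(3) ii unfolding cyl_def by (auto simp: sh_apply add.commute)
    ultimately show ?thesis by simp
  qed
  have "z0 (int n) = a 0" "z1 (int n) = b 0"
    using x2(2) x4(2) unfolding z0_def z1_def cyl_def by auto
  then have dif: "z0 (int n) \<noteq> z1 (int n)" using ab(3) by simp
  show ?thesis
    apply (rule exI[of _ z0], rule exI[of _ z1], rule exI[of _ p], rule exI[of _ a], rule exI[of _ "int n"])
    using z0Y z1Y bl dif nL unfolding p_def by auto
qed

end



lemma divmod_eq:
  fixes p q s :: int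
  assumes "0 < p" "0 \<le> s" "s < p"
  shows "(q * p + s) div p = q" "(q * p + s) mod p = s"
  using assms by (simp_all add: add.commute)

locale blk = sft Y F L for Y :: "(int \<Rightarrow> 'a::finite) set" and F L +
  fixes z0 z1 :: "int \<Rightarrow> 'a" and p :: int and c :: "int \<Rightarrow> 'a" and m :: int
  assumes z0Y: "z0 \<in> Y" and z1Y: "z1 \<in> Y" and pL: "int L \<le> p" and p0: "0 < p"
    and bl: "\<And>i. 0 \<le> i \<Longrightarrow> i < int L \<Longrightarrow> z0 i = c i \<and> z1 i = c i \<and> z0 (p + i) = c i \<and> z1 (p + i) = c i"
    and m: "0 \<le> m" "m < p" "z0 m \<noteq> z1 m"
begin

definition zb :: "bool \<Rightarrow> int \<Rightarrow> 'a" where "zb b = (if b then z1 else z0)"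

definition phi :: "(int \<Rightarrow> bool) \<Rightarrow> int \<Rightarrow> 'a" where
  "phi cc = (\<lambda>i. zb (cc (i div p)) (i mod p))"

lemma zbY: "zb b \<in> Y" by (simp add: zb_def z0Y z1Y)
lemma zb_bl: "0 \<le> i \<Longrightarrow> i < int L \<Longrightarrow> zb b (p + i) = c i \<and> zb b i = c i"
  using bl by (simp add: zb_def)

lemma phi_Y: "phi cc \<in> Y"
proof (rule Y_local)
  fix k
  define q where "q = k div p"
  define r where "r = k mod p"
  have k: "k = q * p + r" "0 \<le> r" "r < p" unfolding q_def r_def using p0 by (auto simp: mult.commute)
  have "\<forall>i. k \<le> i \<and> i < k + int L \<longrightarrow> phi cc i = zb (cc q) (i + (- (q * p)))"
  proof (intro allI impI)
    fix i assume i: "k \<le> i \<and> i < k + int L"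
    show "phi cc i = zb (cc q) (i + (- (q * p)))"
    proof (cases "i < q * p + p")
      case True
      have "i = q * p + (i - q * p)" by simp
      then have "i div p = q" "i mod p = i - q * p" using divmod_eq[OF p0, of "i - q * p" q] True i k by auto
      then show ?thesis unfolding phi_def by simp
    next
      case False
      have e: "i = (q + 1) * p + (i - (q + 1) * p)" by simp
      have s: "0 \<le> i - (q + 1) * p" "i - (q + 1) * p < int L" using False i k by (auto simp: algebra_simps)
      then have s2: "i - (q + 1) * p < p" using pL by simp
      have "i div p = q + 1" "i mod p = i - (q + 1) * p"
        using divmod_eq[OF p0 s(1) s2, of "q + 1"] e by auto
      then have "phi cc i = zb (cc (q + 1)) (i - (q + 1) * p)" unfolding phi_def by simp
      also have "\<dots> = c (i - (q + 1) * p)" using zb_bl[OF s] by simp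
      also have "\<dots> = zb (cc q) (p + (i - (q + 1) * p))" using zb_bl[OF s] by simp
      finally show ?thesis by (simp add: algebra_simps)
    qed
  qed
  then show "\<exists>y\<in>Y. \<exists>d. \<forall>i. k \<le> i \<and> i < k + int L \<longrightarrow> phi cc i = y (i + d)"
    using zbY by blast
qed

lemma phi_sh: "sh (p * q) (phi cc) = phi (sh q cc)"
proof
  fix i
  have "(i + p * q) div p = i div p + q" "(i + p * q) mod p = i mod p" using p0 by (simp_all add: mult.commute)
  then show "sh (p * q) (phi cc) i = phi (sh q cc) i" unfolding phi_def by (simp add: sh_apply)
qed

lemma phi_inj: "inj phi"
proof (rule injI)
  fix c1 c2 assume e: "phi c1 = phi c2"
  show "c1 = c2"
  proof
    fix i
    have "(i * p + m) div p = i" "(i * p + m) mod p = m" using divmod_eq[OF p0 m(1) m(2)] by auto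
    then have "zb (c1 i) m = zb (c2 i) m" using fun_cong[OF e, of "i * p + m"] unfolding phi_def by simp
    then show "c1 i = c2 i" using m(3) unfolding zb_def by (cases "c1 i"; cases "c2 i") auto
  qed
qed

lemma phi_cont: "continuous_map shift_top shift_top phi"
  unfolding shift_top_def continuous_map_componentwise_UNIV phi_def
proof
  fix k
  have h1: "continuous_map (product_topology (\<lambda>_. discrete_topology UNIV) UNIV) (discrete_topology UNIV) (\<lambda>x::int\<Rightarrow>bool. x (k div p))"
    by (rule continuous_map_product_projection) simp
  have h2: "continuous_map (discrete_topology UNIV) (discrete_topology UNIV) (\<lambda>b. zb b (k mod p))"
    by simp
  show "continuous_map (product_topology (\<lambda>_. discrete_topology UNIV) UNIV) (discrete_topology UNIV) (\<lambda>x. zb (x (k div p)) (k mod p))"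
    using continuous_map_compose[OF h1 h2] by (simp add: o_def)
qed

end



context blk begin

definition Zs :: "(int \<Rightarrow> 'a) set" where
  "Zs = (\<Union>j\<in>{0..<p}. sh j ` phi ` Cset)"

lemma Z_mem: assumes "cc \<in> Cset" shows "sh d (phi cc) \<in> Zs"
proof -
  have "d mod p + p * (d div p) = d" by (rule mod_mult_div_eq)
  then have "sh d (phi cc) = sh (d mod p) (sh (p * (d div p)) (phi cc))" by (metis sh_sh)
  also have "\<dots> = sh (d mod p) (phi (sh (d div p) cc))" by (simp add: phi_sh)
  finally have e: "sh d (phi cc) = sh (d mod p) (phi (sh (d div p) cc))" .
  have mem: "d mod p \<in> {0..<p}" using p0 by simp
  have img: "sh (d mod p) (phi (sh (d div p) cc)) \<in> sh (d mod p) ` phi ` Cset"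
    using C_sh[OF assms] by blast
  show ?thesis unfolding Zs_def e by (rule UN_I[where B="\<lambda>j. sh j ` phi ` Cset", OF mem img])
qed

lemma Z_elem: "y \<in> Zs \<Longrightarrow> \<exists>j cc. cc \<in> Cset \<and> 0 \<le> j \<and> j < p \<and> y = sh j (phi cc)"
proof -
  assume "y \<in> Zs"
  then obtain j where j: "j \<in> {0..<p}" "y \<in> sh j ` phi ` Cset" unfolding Zs_def by (rule UN_E)
  then obtain cc where "cc \<in> Cset" "y = sh j (phi cc)" by blast
  then show ?thesis using j(1) by auto
qed

lemma Z_inv: "sh d ` Zs \<subseteq> Zs"
proof
  fix y assume "y \<in> sh d ` Zs"
  then obtain z where z: "z \<in> Zs" "y = sh d z" by blast
  then obtain j cc where "cc \<in> Cset" "z = sh j (phi cc)" using Z_elem by blast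
  then show "y \<in> Zs" using z Z_mem by simp
qed

lemma Z_sub: "Zs \<subseteq> Y"
  unfolding Zs_def using phi_Y Y_sh by auto

lemma Z_closed: "closedin shift_top Zs"
proof -
  have cC: "compactin shift_top Cset" by (rule closedin_compact_space[OF compact_shift_top Cset_closed])
  have "compactin shift_top (sh j ` phi ` Cset)" for j
    using image_compactin[OF image_compactin[OF cC phi_cont] cont_sh] .
  then have "compactin shift_top Zs" unfolding Zs_def by (intro compactin_Union) auto
  then show ?thesis by (rule compactin_imp_closedin[OF hausdorff_shift_top])
qed

lemma Z_inf: "infinite Zs"
proof
  assume "finite Zs"
  moreover have "phi ` Cset \<subseteq> Zs" using Z_mem[of _ 0] by auto
  ultimately have "finite (phi ` Cset)" using finite_subset by blast
  then have "finite Cset" using finite_imageD phi_inj inj_on_subset subset_UNIV by blast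
  then show False using Cset_inf by simp
qed

lemma Z_per:
  assumes "x \<in> Zs" "openin shift_top W" "x \<in> W"
  shows "\<exists>y\<in>Zs \<inter> W. \<exists>P>0. sh P y = y"
proof -
  obtain j cc where jc: "cc \<in> Cset" "x = sh j (phi cc)" using Z_elem[OF assms(1)] by blast
  let ?W' = "{c' \<in> topspace shift_top. (sh j \<circ> phi) c' \<in> W}"
  have "openin shift_top ?W'"
    by (rule openin_continuous_map_preimage[OF continuous_map_compose[OF phi_cont cont_sh] assms(2)])
  moreover have "cc \<in> ?W'" using jc assms(3) by simp
  ultimately obtain N where N: "cyl cc N \<subseteq> ?W'" using openin_cyl_sub by blast
  obtain y P where y: "y \<in> Cset" "y \<in> cyl cc (int (nat N))" "P > 0" "sh P y = y"
    using Cset_per_dense[OF jc(1), of "nat N"] by blast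
  have "y \<in> ?W'" using y(2) N cyl_nat by blast
  then have "sh j (phi y) \<in> W" by simp
  moreover have "sh j (phi y) \<in> Zs" using Z_mem[OF y(1)] .
  moreover have "sh (p * P) (sh j (phi y)) = sh j (phi y)"
  proof -
    have "sh (p * P) (sh j (phi y)) = sh j (sh (p * P) (phi y))" by (simp add: add.commute)
    also have "\<dots> = sh j (phi y)" by (simp add: phi_sh y(4))
    finally show ?thesis .
  qed
  moreover have "p * P > 0" using p0 y(3) by simp
  ultimately show ?thesis by blast
qed

lemma Z_min:
  assumes D: "D \<subseteq> Zs" "closedin shift_top D" "\<And>d. sh d ` D \<subseteq> D" "infinite D"
  shows "D = Zs"
proof -
  define D' where "D' = {cc \<in> Cset. phi cc \<in> D}"
  have D'1: "D' \<subseteq> Cset" unfolding D'_def by auto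
  have D'2: "closedin shift_top D'"
  proof -
    have "closedin shift_top {cc \<in> topspace shift_top. phi cc \<in> D}"
      by (rule closedin_continuous_map_preimage[OF phi_cont D(2)])
    then have "closedin shift_top (Cset \<inter> {cc \<in> topspace shift_top. phi cc \<in> D})"
      by (intro closedin_Int Cset_closed)
    moreover have "D' = Cset \<inter> {cc \<in> topspace shift_top. phi cc \<in> D}" unfolding D'_def by auto
    ultimately show ?thesis by simp
  qed
  have D'3: "sh d ` D' \<subseteq> D'" for d
  proof
    fix y assume "y \<in> sh d ` D'"
    then obtain cc where cc: "cc \<in> D'" "y = sh d cc" by blast
    have "phi y = sh (p * d) (phi cc)" using cc(2) phi_sh by simp
    moreover have "phi cc \<in> D" using cc(1) unfolding D'_def by blast
    ultimately have "phi y \<in> D" using subsetD[OF D(3) imageI] by metis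
    then show "y \<in> D'" using C_sh cc unfolding D'_def by blast
  qed
  have cover: "D \<subseteq> (\<lambda>(j, cc). sh j (phi cc)) ` ({0..<p} \<times> D')"
  proof
    fix y assume y: "y \<in> D"
    then obtain j cc where jc: "cc \<in> Cset" "0 \<le> j" "j < p" "y = sh j (phi cc)" using Z_elem D(1) by blast
    have "phi cc = sh (-j) y" using jc(4) by simp
    then have "phi cc \<in> D" using subsetD[OF D(3) imageI[OF y]] by metis
    then have "cc \<in> D'" using jc(1) unfolding D'_def by blast
    then show "y \<in> (\<lambda>(j, cc). sh j (phi cc)) ` ({0..<p} \<times> D')" using jc by force
  qed
  have "infinite D'"
  proof
    assume "finite D'"
    then have "finite ((\<lambda>(j, cc). sh j (phi cc)) ` ({0..<p} \<times> D'))" by simp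
    then show False using cover D(4) finite_subset by blast
  qed
  then have "D' = Cset" using C_min[OF D'1 D'2 D'3] by blast
  show ?thesis
  proof
    show "D \<subseteq> Zs" by fact
    show "Zs \<subseteq> D"
    proof
      fix y assume "y \<in> Zs"
      then obtain j cc where jc: "cc \<in> Cset" "y = sh j (phi cc)" using Z_elem by blast
      then have "phi cc \<in> D" using \<open>D' = Cset\<close> unfolding D'_def by blast
      then show "y \<in> D" using subsetD[OF D(3) imageI] jc(2) by metis
    qed
  qed
qed

lemma Z_CAM: "CAM_system (subtopology shift_top Zs) shift"
  by (rule CAM_general[OF Z_closed Z_inv Z_inf Z_per Z_min])

end


theorem theorem2p9:
  fixes Y :: "(int \<Rightarrow> 'a::finite) set"
  assumes "is_SFT Y" and "infinite Y" and "mixing_shift Y"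
  shows "\<exists>Z. Z \<subseteq> Y \<and> closedin shift_top Z \<and> shift ` Z = Z \<and>
             CAM_system (subtopology shift_top Z) shift"
proof -
  obtain F :: "'a list set" where F: "finite F" "Y = {x. \<forall>w\<in>F. \<forall>n. \<not> occurs_at w x n}"
    using assms(1) unfolding is_SFT_def by blast
  define L where "L = Max (insert 0 (length ` F))"
  have Lb: "\<And>w. w \<in> F \<Longrightarrow> length w \<le> L" unfolding L_def using F(1) by (intro Max_ge) auto
  interpret sft Y F L using F(2) Lb by unfold_locales auto
  obtain z0 z1 p c m where bk: "z0 \<in> Y" "z1 \<in> Y" "int L \<le> p" "0 < p"
    "\<forall>i. 0 \<le> i \<and> i < int L \<longrightarrow> z0 i = c i \<and> z1 i = c i \<and> z0 (p + i) = c i \<and> z1 (p + i) = c i"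
    "0 \<le> m" "m < p" "z0 m \<noteq> z1 m"
    using blocks[OF assms(2) assms(3)] by blast
  interpret blk Y F L z0 z1 p c m using bk by unfold_locales auto
  show ?thesis
    using Z_sub Z_closed inv_all_shift[OF Z_inv] Z_CAM by blast
qed

end
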